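(* (i) Every graph with $n$ vertices has at most $\sqrt{n+1}\cdot 2^{n/2}$ cliques or at most $\sqrt{n+1}\cdot 2^{n/2}$ cocliques. (ii) For every $n\ge 0$ there is a graph with $n$ vertices that has at least $\frac12\sqrt{n+1}\cdot 2^{n/2}$ cliques and at least $\frac12\sqrt{n+1}\cdot 2^{n/2}$ cocliques.
   Context: A graph is a finite simple undirected graph $(V,E)$. A clique is a set $X\subseteq V$ with every two distinct vertices adjacent; a coclique is a set $Y\subseteq V$ with no two distinct vertices adjacent (the empty set and singletons count as both). *)

theory Defs
  imports Complex_Main
begin

definition simple_graph :: "'a set \<Rightarrow> ('a \<Rightarrow> 'a \<Rightarrow> bool) \<Rightarrow> bool" where
  "simple_graph V E \<longleftrightarrow> finite V \<and> (\<forall>x y. E x y \<longrightarrow> E y x)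
     \<and> (\<forall>x. \<not> E x x) \<and> (\<forall>x y. E x y \<longrightarrow> x \<in> V \<and> y \<in> V)"

definition is_clique :: "'a set \<Rightarrow> ('a \<Rightarrow> 'a \<Rightarrow> bool) \<Rightarrow> 'a set \<Rightarrow> bool" where
  "is_clique V E X \<longleftrightarrow> X \<subseteq> V \<and> (\<forall>x\<in>X. \<forall>y\<in>X. x \<noteq> y \<longrightarrow> E x y)"

definition is_coclique :: "'a set \<Rightarrow> ('a \<Rightarrow> 'a \<Rightarrow> bool) \<Rightarrow> 'a set \<Rightarrow> bool" where
  "is_coclique V E Y \<longleftrightarrow> Y \<subseteq> V \<and> (\<forall>x\<in>Y. \<forall>y\<in>Y. x \<noteq> y \<longrightarrow> \<not> E x y)"

definition num_cliques :: "'a set \<Rightarrow> ('a \<Rightarrow> 'a \<Rightarrow> bool) \<Rightarrow> nat" where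
  "num_cliques V E = card {X. is_clique V E X}"

definition num_cocliques :: "'a set \<Rightarrow> ('a \<Rightarrow> 'a \<Rightarrow> bool) \<Rightarrow> nat" where
  "num_cocliques V E = card {Y. is_coclique V E Y}"

end

theory Submission
  imports Defs
begin

lemma sqrt_eq: "sqrt (real n + 1) * 2 powr (real n / 2) = sqrt ((real n + 1) * 2 ^ n)"
proof -
  have "2 powr (real n / 2) = (2 powr real n) powr (1/2)" by (simp add: powr_powr)
  also have "\<dots> = sqrt (2 ^ n)" by (simp add: powr_half_sqrt powr_realpow)
  finally show ?thesis by (simp add: real_sqrt_mult)
qed

lemma part_lemma:
  assumes "finite S" "S \<subseteq> V"
  shows "card {X. X \<subseteq> S \<and> is_clique V E X \<and> is_coclique V E (S - X)} \<le> card S + 1"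
  using assms
proof (induction S rule: finite_induct)
  case empty
  have e0: "{X. X \<subseteq> {} \<and> is_clique V E X \<and> is_coclique V E ({} - X)} \<subseteq> {{}}" by blast
  have "card {X. X \<subseteq> {} \<and> is_clique V E X \<and> is_coclique V E ({} - X)} \<le> 1"
    using card_mono[OF _ e0] by simp
  then show ?case by simp
next
  case (insert v S)
  define A where "A = {X. X \<subseteq> insert v S \<and> is_clique V E X \<and> is_coclique V E (insert v S - X)}"
  define B where "B = {X. X \<subseteq> S \<and> is_clique V E X \<and> is_coclique V E (S - X)}"
  define A1 where "A1 = {X\<in>A. v \<notin> X}"
  define A2 where "A2 = {X\<in>A. v \<in> X}"
  define B2 where "B2 = (\<lambda>X. X - {v}) ` A2"
  have finA: "finite A" unfolding A_def
    by (rule finite_subset[of _ "Pow (insert v S)"]) (auto simp: insert.hyps)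
  have finB: "finite B" unfolding B_def
    by (rule finite_subset[of _ "Pow S"]) (auto simp: insert.hyps)
  have A1B: "A1 \<subseteq> B"
    using insert.hyps unfolding A1_def A_def B_def is_coclique_def by auto
  have B2B: "B2 \<subseteq> B"
    using insert.hyps unfolding B2_def A2_def A_def B_def is_coclique_def is_clique_def by auto
  have injA2: "inj_on (\<lambda>X. X - {v}) A2"
    unfolding A2_def inj_on_def by auto
  have cA2: "card A2 = card B2" unfolding B2_def using card_image[OF injA2] by simp
  have Aun: "A = A1 \<union> A2" "A1 \<inter> A2 = {}" unfolding A1_def A2_def by auto
  have int1: "card (A1 \<inter> B2) \<le> 1"
  proof -
    have "\<forall>X1\<in>A1 \<inter> B2. \<forall>X2\<in>A1 \<inter> B2. X1 = X2"
    proof (intro ballI)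
      fix X1 X2 assume h1: "X1 \<in> A1 \<inter> B2" and h2: "X2 \<in> A1 \<inter> B2"
      have key: "X \<subseteq> Y" if a: "X \<in> A1 \<inter> B2" and b: "Y \<in> A1 \<inter> B2" for X Y
      proof
        fix u assume u: "u \<in> X"
        show "u \<in> Y"
        proof (rule ccontr)
          assume nu: "u \<notin> Y"
          from a obtain Z where Z: "Z \<in> A2" "X = Z - {v}" unfolding B2_def by auto
          have vZ: "v \<in> Z" "is_clique V E Z" using Z unfolding A2_def A_def by auto
          have uZ: "u \<in> Z" using u Z by auto
          have uv: "u \<noteq> v" using u Z by auto
          have Evu: "E v u" using vZ uZ uv unfolding is_clique_def by auto
          have "X \<subseteq> S" using a unfolding A1_def A_def using Z by auto
          hence uS: "u \<in> S" using u by auto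
          have "v \<notin> Y" "is_coclique V E (insert v S - Y)" using b unfolding A1_def A_def by auto
          then show False using Evu uS nu uv unfolding is_coclique_def by auto
        qed
      qed
      show "X1 = X2" using key[OF h1 h2] key[OF h2 h1] by auto
    qed
    then show ?thesis using card_le_Suc0_iff_eq[of "A1 \<inter> B2"] finA Aun
      by (metis card_le_Suc0_iff_eq finite_Int finite_Un One_nat_def)
  qed
  have "card A = card A1 + card A2" using Aun finA
    by (metis card_Un_disjoint finite_Un)
  also have "\<dots> = card A1 + card B2" using cA2 by simp
  also have "\<dots> = card (A1 \<union> B2) + card (A1 \<inter> B2)"
    using card_Un_Int[of A1 B2] finite_subset[OF A1B finB] finite_subset[OF B2B finB] by simp
  also have "\<dots> \<le> card B + 1"
    using card_mono[OF finB, of "A1 \<union> B2"] A1B B2B int1 by auto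
  also have "card B \<le> card S + 1" using insert unfolding B_def by auto
  finally show ?case unfolding A_def using insert.hyps by simp
qed

lemma sum_card_Pow:
  assumes "finite V"
  shows "2 * (\<Sum>S\<in>Pow V. card S) = card V * 2 ^ card V"
  using assms
proof (induction V rule: finite_induct)
  case empty then show ?case by simp
next
  case (insert a A)
  have inj: "inj_on (insert a) (Pow A)" using insert.hyps unfolding inj_on_def by auto
  have disj: "Pow A \<inter> insert a ` Pow A = {}" using insert.hyps by auto
  have "(\<Sum>S\<in>Pow (insert a A). card S) = (\<Sum>S\<in>Pow A. card S) + (\<Sum>S\<in>insert a ` Pow A. card S)"
    unfolding Pow_insert using disj insert.hyps by (simp add: sum.union_disjoint)
  also have "(\<Sum>S\<in>insert a ` Pow A. card S) = (\<Sum>S\<in>Pow A. card (insert a S))"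
    using sum.reindex[OF inj] by simp
  also have "\<dots> = (\<Sum>S\<in>Pow A. card S + 1)"
  proof (intro sum.cong refl)
    fix S assume "S \<in> Pow A"
    then show "card (insert a S) = card S + 1"
      using insert.hyps finite_subset[of S A] by (auto simp: card_insert_if)
  qed
  also have "\<dots> = (\<Sum>S\<in>Pow A. card S) + 2 ^ card A"
    using insert.hyps by (simp only: sum.distrib) (simp add: card_Pow)
  finally have st: "(\<Sum>S\<in>Pow (insert a A). card S) = (\<Sum>S\<in>Pow A. card S) + ((\<Sum>S\<in>Pow A. card S) + 2 ^ card A)" .
  have ci: "card (insert a A) = Suc (card A)" using insert.hyps by simp
  have "2 * (\<Sum>S\<in>Pow (insert a A). card S) = 2 * (2 * (\<Sum>S\<in>Pow A. card S)) + 2 * 2 ^ card A"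
    unfolding st by simp
  also have "\<dots> = 2 * (card A * 2 ^ card A) + 2 * 2 ^ card A" using insert.IH by simp
  also have "\<dots> = card (insert a A) * 2 ^ card (insert a A)" unfolding ci by simp
  finally show ?case .
qed

lemma product_bound:
  assumes "simple_graph V E"
  shows "num_cliques V E * num_cocliques V E \<le> (card V + 1) * 2 ^ card V"
proof -
  have finV: "finite V" using assms unfolding simple_graph_def by auto
  define C where "C = {X. is_clique V E X}"
  define D where "D = {Y. is_coclique V E Y}"
  have finC: "finite C" unfolding C_def is_clique_def
    by (rule finite_subset[of _ "Pow V"]) (auto simp: finV)
  have finD: "finite D" unfolding D_def is_coclique_def
    by (rule finite_subset[of _ "Pow V"]) (auto simp: finV)
  define P where "P = C \<times> D"
  define P1 where "P1 = {p\<in>P. fst p \<inter> snd p = {}}"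
  define P2 where "P2 = {p\<in>P. fst p \<inter> snd p \<noteq> {}}"
  have finP: "finite P" unfolding P_def using finC finD by simp
  have PU: "P = P1 \<union> P2" unfolding P1_def P2_def by auto
  define Af where "Af = (\<lambda>S. {X. X \<subseteq> S \<and> is_clique V E X \<and> is_coclique V E (S - X)})"
  have P1sub: "P1 \<subseteq> (\<Union>S\<in>Pow V. (\<lambda>X. (X, S - X)) ` Af S)"
  proof
    fix p assume p: "p \<in> P1"
    obtain X Y where XY: "p = (X, Y)" by (cases p)
    have h: "is_clique V E X" "is_coclique V E Y" "X \<inter> Y = {}"
      using p XY unfolding P1_def P_def C_def D_def by auto
    have YE: "(X \<union> Y) - X = Y" using h(3) by (simp add: Un_Diff Diff_triv inf_commute)
    have "X \<union> Y \<in> Pow V" using h unfolding is_clique_def is_coclique_def by auto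
    have "X \<in> Af (X \<union> Y)" unfolding Af_def using h YE by simp
    then have "(X, (X \<union> Y) - X) \<in> (\<lambda>Z. (Z, (X \<union> Y) - Z)) ` Af (X \<union> Y)" by (rule imageI)
    then have "p \<in> (\<lambda>Z. (Z, (X \<union> Y) - Z)) ` Af (X \<union> Y)" unfolding YE XY .
    then show "p \<in> (\<Union>S\<in>Pow V. (\<lambda>X. (X, S - X)) ` Af S)" by (rule UN_I[of "X \<union> Y" "Pow V" p "\<lambda>S. (\<lambda>X. (X, S - X)) ` Af S", OF \<open>X \<union> Y \<in> Pow V\<close>])
  qed
  have finAf: "finite (Af S)" if "S \<in> Pow V" for S
  proof -
    have "finite S" using that finV finite_subset by blast
    moreover have "Af S \<subseteq> Pow S" unfolding Af_def by blast
    ultimately show ?thesis using finite_subset by blast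
  qed
  have finU: "finite (\<Union>S\<in>Pow V. (\<lambda>X. (X, S - X)) ` Af S)"
    using finV finAf by blast
  have "card P1 \<le> card (\<Union>S\<in>Pow V. (\<lambda>X. (X, S - X)) ` Af S)"
    by (rule card_mono[OF finU P1sub])
  also have "\<dots> \<le> (\<Sum>S\<in>Pow V. card ((\<lambda>X. (X, S - X)) ` Af S))"
    by (rule card_UN_le) (simp add: finV)
  also have "\<dots> \<le> (\<Sum>S\<in>Pow V. card S + 1)"
  proof (rule sum_mono)
    fix S assume S: "S \<in> Pow V"
    have "card ((\<lambda>X. (X, S - X)) ` Af S) \<le> card (Af S)" by (rule card_image_le[OF finAf[OF S]])
    also have "\<dots> \<le> card S + 1" unfolding Af_def
      using part_lemma[of S V E] S finite_subset[of S V] finV by blast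
    finally show "card ((\<lambda>X. (X, S - X)) ` Af S) \<le> card S + 1" .
  qed
  finally have c1: "card P1 \<le> (\<Sum>S\<in>Pow V. card S) + 2 ^ card V"
    by (simp only: sum.distrib) (simp add: card_Pow finV)
  define g where "g = (\<lambda>(S::'a set, v). (insert v {u\<in>S-{v}. E v u}, insert v {u\<in>S-{v}. \<not> E v u}))"
  have P2sub: "P2 \<subseteq> g ` (SIGMA S:Pow V. S)"
  proof
    fix p assume p: "p \<in> P2"
    obtain X Y where XY: "p = (X, Y)" by (cases p)
    have h: "is_clique V E X" "is_coclique V E Y" "X \<inter> Y \<noteq> {}"
      using p XY unfolding P2_def P_def C_def D_def by auto
    obtain v where v: "v \<in> X" "v \<in> Y" using h(3) by auto
    have XE: "insert v {u\<in>(X \<union> Y)-{v}. E v u} = X"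
    proof -
      have "u \<in> X" if "u \<in> Y" "u \<noteq> v" "E v u" for u
        using h(2) that v unfolding is_coclique_def by auto
      moreover have "E v u" if "u \<in> X" "u \<noteq> v" for u
        using h(1) that v unfolding is_clique_def by auto
      ultimately show ?thesis using v by auto
    qed
    have YE: "insert v {u\<in>(X \<union> Y)-{v}. \<not> E v u} = Y"
    proof -
      have "u \<in> Y" if "u \<in> X" "u \<noteq> v" "\<not> E v u" for u
        using h(1) that v unfolding is_clique_def by auto
      moreover have "\<not> E v u" if "u \<in> Y" "u \<noteq> v" for u
        using h(2) that v unfolding is_coclique_def by auto
      ultimately show ?thesis using v by auto
    qed
    have "(X \<union> Y, v) \<in> (SIGMA S:Pow V. S)"
      using h v unfolding is_clique_def is_coclique_def by auto
    moreover have "g (X \<union> Y, v) = p" unfolding g_def XY by (simp only: XE YE prod.case)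
    ultimately show "p \<in> g ` (SIGMA S:Pow V. S)" by force
  qed
  have finSig: "finite (SIGMA S:Pow V. S)"
    using finV by (auto intro: finite_SigmaI dest: finite_subset)
  have "card P2 \<le> card (g ` (SIGMA S:Pow V. S))"
    by (rule card_mono[OF _ P2sub]) (simp add: finSig)
  also have "\<dots> \<le> card (SIGMA S:Pow V. S)" by (rule card_image_le[OF finSig])
  also have "\<dots> = (\<Sum>S\<in>Pow V. card S)"
    using finV by (subst card_SigmaI) (auto dest: finite_subset)
  finally have c2: "card P2 \<le> (\<Sum>S\<in>Pow V. card S)" .
  have "num_cliques V E * num_cocliques V E = card P"
    unfolding num_cliques_def num_cocliques_def P_def C_def D_def by (simp add: card_cartesian_product)
  also have "\<dots> \<le> card P1 + card P2" unfolding PU by (rule card_Un_le)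
  also have "\<dots> \<le> 2 * (\<Sum>S\<in>Pow V. card S) + 2 ^ card V" using c1 c2 by simp
  also have "\<dots> = (card V + 1) * 2 ^ card V" using sum_card_Pow[OF finV] by simp
  finally show ?thesis .
qed


lemma sqrt_half_le:
  fixes x M :: nat
  assumes "M \<le> 4 * x^2"
  shows "sqrt (real M) / 2 \<le> real x"
proof -
  have "real M \<le> (2 * real x)^2" using assms
    by (simp add: power_mult_distrib) (metis of_nat_le_iff of_nat_mult of_nat_numeral of_nat_power)
  then have "sqrt (real M) \<le> 2 * real x"
    using real_le_lsqrt by (metis of_nat_0_le_iff real_sqrt_le_iff real_sqrt_unique zero_le_mult_iff zero_le_numeral)
  then show ?thesis by simp
qed

lemma min_sqrt:
  fixes c d M :: real
  assumes "0 \<le> c" "0 \<le> d" "c * d \<le> M"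
  shows "c \<le> sqrt M \<or> d \<le> sqrt M"
proof (rule ccontr)
  assume "\<not> ?thesis"
  then have h: "sqrt M < c" "sqrt M < d" by auto
  have "0 \<le> M" using assms by (meson order_trans zero_le_mult_iff)
  then have "M = sqrt M * sqrt M" by simp
  also have "\<dots> < c * d" using h by (meson mult_strict_mono' real_sqrt_ge_zero \<open>0 \<le> M\<close>)
  finally show False using assms by simp
qed

lemma choose_a:
  fixes n :: nat
  obtains a where "a \<le> n" "(n+1) * 2^n \<le> 4 * 4^a" "(n+1) * 2^n \<le> 4 * (a+1)^2 * 4^(n-a)"
proof -
  define P where "P = (\<lambda>a::nat. (n+1) * 2^n \<le> 4 * 4^a)"
  have Pn: "P n"
  proof -
    have "n + 1 \<le> 4 * 2^n" using less_exp[of n] by linarith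
    then have "(n+1) * 2^n \<le> (4 * 2^n) * 2^n" by (rule mult_right_mono) simp
    also have "\<dots> = 4 * 4^n" by (simp add: power_mult_distrib[symmetric])
    finally show ?thesis unfolding P_def .
  qed
  define a where "a = (LEAST a. P a)"
  have Pa: "P a" unfolding a_def by (rule LeastI[of P n, OF Pn])
  have an: "a \<le> n" unfolding a_def by (rule Least_le[of P n, OF Pn])
  have c2: "(n+1) * 2^n \<le> 4 * (a+1)^2 * 4^(n-a)"
  proof (cases a)
    case 0
    then show ?thesis using Pn unfolding P_def by simp
  next
    case (Suc b)
    have nP: "\<not> P b" unfolding a_def using Suc a_def not_less_Least by (metis lessI)
    then have lt: "4^a < (n+1) * 2^n" unfolding P_def using Suc by simp
    have big: "n + 1 \<le> 2 * (a + 1)"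
    proof (rule ccontr)
      assume "\<not> ?thesis"
      then have "2 * a + 2 \<le> n" by simp
      then have le: "(2::nat)^(2*a+2) \<le> 2^n" by (rule power_increasing) simp
      have "(n+1) * 2^n \<le> 4 * 4^a" using Pa unfolding P_def .
      also have "(4::nat) * 4^a = 2^(2*a+2)"
        by (simp add: power_add power_mult)
      also note le
      finally have "(n+1) * 2^n \<le> 1 * 2^n" by simp
      then have "n + 1 \<le> 1" by (simp only: mult_le_cancel2) simp
      then show False using Suc an by simp
    qed
    have "(n+1) * 2^n * 4^a \<le> (n+1) * 2^n * ((n+1) * 2^n)" using lt by simp
    also have "\<dots> = (n+1)^2 * 4^n"
    proof -
      have f: "(4::nat)^n = 2^n * 2^n" by (simp add: power_mult_distrib[symmetric])
      show ?thesis unfolding f power2_eq_square by (simp only: mult_ac)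
    qed
    also have "\<dots> \<le> (2*(a+1))^2 * 4^n" using big by (simp add: power_mono)
    also have "\<dots> = 4 * (a+1)^2 * 4^(n-a) * 4^a"
    proof -
      have f: "(4::nat)^n = 4^(n-a) * 4^a" using an by (simp add: power_add[symmetric])
      have g: "(2*(a+1))^2 = 4 * (a+1)^2" by (simp only: power_mult_distrib) simp
      show ?thesis unfolding f g by (simp only: mult_ac)
    qed
    finally show ?thesis by simp
  qed
  show ?thesis using that an Pa c2 unfolding P_def by blast
qed

lemma construction:
  fixes n :: nat
  shows "\<exists>(V :: nat set) E. simple_graph V E \<and> card V = n
          \<and> real (num_cliques V E) \<ge> sqrt (real n + 1) * 2 powr (real n / 2) / 2
          \<and> real (num_cocliques V E) \<ge> sqrt (real n + 1) * 2 powr (real n / 2) / 2"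
proof -
  obtain a where an: "a \<le> n" and c1: "(n+1) * 2^n \<le> 4 * 4^a"
    and c2: "(n+1) * 2^n \<le> 4 * (a+1)^2 * 4^(n-a)" by (rule choose_a)
  define V where "V = {0..<n}"
  define E where "E = (\<lambda>x y::nat. x < a \<and> y < a \<and> x \<noteq> y)"
  have sg: "simple_graph V E" unfolding simple_graph_def V_def E_def using an by auto
  have finV: "finite V" unfolding V_def by simp
  have finC: "finite {X. is_clique V E X}"
    by (rule finite_subset[of _ "Pow V"]) (auto simp: is_clique_def finV)
  have finD: "finite {X. is_coclique V E X}"
    by (rule finite_subset[of _ "Pow V"]) (auto simp: is_coclique_def finV)
  have "Pow {0..<a} \<subseteq> {X. is_clique V E X}"
    unfolding is_clique_def V_def E_def using an by auto
  then have "card (Pow {0..<a}) \<le> num_cliques V E"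
    unfolding num_cliques_def by (rule card_mono[OF finC])
  then have cl: "2^a \<le> num_cliques V E" by (simp add: card_Pow)
  define T where "T = Pow {a..<n}"
  define h where "h = (\<lambda>(k::nat, S::nat set). insert k S)"
  have "T \<union> h ` ({0..<a} \<times> T) \<subseteq> {X. is_coclique V E X}"
    unfolding T_def h_def is_coclique_def V_def E_def using an by auto
  then have cc: "card (T \<union> h ` ({0..<a} \<times> T)) \<le> num_cocliques V E"
    unfolding num_cocliques_def by (rule card_mono[OF finD])
  have inj: "inj_on h ({0..<a} \<times> T)"
  proof (rule inj_onI)
    fix p q assume p: "p \<in> {0..<a} \<times> T" and q: "q \<in> {0..<a} \<times> T" and e: "h p = h q"
    obtain k S where kS: "p = (k, S)" by (cases p)
    obtain k' S' where kS': "q = (k', S')" by (cases q)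
    have k: "k < a" "S \<subseteq> {a..<n}" using p kS unfolding T_def by auto
    have k': "k' < a" "S' \<subseteq> {a..<n}" using q kS' unfolding T_def by auto
    have e2: "insert k S = insert k' S'" using e kS kS' unfolding h_def by simp
    have "k \<in> insert k' S'" using e2 by blast
    then have "k = k'" using k k' by auto
    moreover have "S = insert k S - {k}" using k by auto
    moreover have "S' = insert k' S' - {k'}" using k' by auto
    ultimately have "S = S'" using e2 by metis
    then show "p = q" using kS kS' \<open>k = k'\<close> by simp
  qed
  have disj: "T \<inter> h ` ({0..<a} \<times> T) = {}"
    unfolding T_def h_def by auto
  have finT: "finite T" unfolding T_def by simp
  have "card (T \<union> h ` ({0..<a} \<times> T)) = card T + card (h ` ({0..<a} \<times> T))"
    by (rule card_Un_disjoint[OF finT _ disj]) (simp add: finT)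
  also have "card (h ` ({0..<a} \<times> T)) = a * card T"
    using card_image[OF inj] by (simp add: card_cartesian_product)
  also have "card T = 2^(n-a)" unfolding T_def by (simp add: card_Pow)
  finally have co: "(a+1) * 2^(n-a) \<le> num_cocliques V E" using cc by simp
  have e: "sqrt (real n + 1) * 2 powr (real n / 2) / 2 = sqrt (real ((n+1) * 2^n)) / 2"
    unfolding sqrt_eq by (simp only: of_nat_mult of_nat_power of_nat_add of_nat_1 of_nat_numeral)
  have 4: "(4::nat)^m = (2^m)^2" for m by (simp add: power_mult_distrib[symmetric] power2_eq_square)
  have b1: "(n+1) * 2^n \<le> 4 * (num_cliques V E)^2"
  proof -
    have "(n+1) * 2^n \<le> 4 * (2^a)^2" using c1 by (simp add: 4)
    also have "\<dots> \<le> 4 * (num_cliques V E)^2" using cl by (simp add: power_mono)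
    finally show ?thesis .
  qed
  have b2: "(n+1) * 2^n \<le> 4 * (num_cocliques V E)^2"
  proof -
    have "4 * ((a+1) * 2^(n-a))^2 = 4 * (a+1)^2 * 4^(n-a)"
      unfolding 4 power_mult_distrib by (simp only: mult.assoc)
    then have "(n+1) * 2^n \<le> 4 * ((a+1) * 2^(n-a))^2" using c2 by simp
    also have "\<dots> \<le> 4 * (num_cocliques V E)^2" using co by (simp add: power_mono)
    finally show ?thesis .
  qed
  have cV: "card V = n" unfolding V_def by simp
  show ?thesis
    using sg cV sqrt_half_le[OF b1] sqrt_half_le[OF b2] unfolding e by blast
qed

theorem theorem2:
  shows "(\<forall>(V :: 'a set) E. simple_graph V E \<longrightarrow>
            real (num_cliques V E) \<le> sqrt (real (card V) + 1) * 2 powr (real (card V) / 2)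
          \<or> real (num_cocliques V E) \<le> sqrt (real (card V) + 1) * 2 powr (real (card V) / 2))
      \<and> (\<forall>n::nat. \<exists>(V :: nat set) E. simple_graph V E \<and> card V = n
          \<and> real (num_cliques V E) \<ge> sqrt (real n + 1) * 2 powr (real n / 2) / 2
          \<and> real (num_cocliques V E) \<ge> sqrt (real n + 1) * 2 powr (real n / 2) / 2)"

proof (intro conjI allI impI)
  fix V :: "'a set" and E
  assume g: "simple_graph V E"
  have pb: "real (num_cliques V E) * real (num_cocliques V E) \<le> real ((card V + 1) * 2 ^ card V)"
    using product_bound[OF g] by (metis of_nat_le_iff of_nat_mult)
  have r: "real ((card V + 1) * 2 ^ card V) = (real (card V) + 1) * 2 ^ card V" by (simp add: algebra_simps)
  show "real (num_cliques V E) \<le> sqrt (real (card V) + 1) * 2 powr (real (card V) / 2)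
          \<or> real (num_cocliques V E) \<le> sqrt (real (card V) + 1) * 2 powr (real (card V) / 2)"
    unfolding sqrt_eq by (rule min_sqrt[OF _ _ pb[unfolded r]]) simp_all
next
  fix n :: nat
  show "\<exists>(V :: nat set) E. simple_graph V E \<and> card V = n
          \<and> real (num_cliques V E) \<ge> sqrt (real n + 1) * 2 powr (real n / 2) / 2
          \<and> real (num_cocliques V E) \<ge> sqrt (real n + 1) * 2 powr (real n / 2) / 2"
    by (rule construction)
qed

end
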